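(* Let $n\ge1$, let $\mu,\nu\in\mathbb{R}^n$ be probability vectors, let $\gamma>0$, and let $\phi$ satisfy the Bregman assumption in the context with $\phi'_0$ finite. Let $\hat C\in\mathbb{R}^{n\times n}$ and $\hat X:=\mathcal{F}(\hat C)$. If $\hat X_{ij}=0$ for some $1\le i,j\le n$, then for every $\lambda>0$, $$\mathcal{F}(\hat C)=\hat X=\mathcal{F}(\hat C+\lambda E^{(i,j)}),$$ where $E^{(i,j)}$ is the $n\times n$ matrix with $1$ in entry $(i,j)$ and zeros elsewhere.
   Context: Probability vectors have nonnegative entries summing to $1$. $\mathcal{U}(\mu,\nu):=\{X\in\mathbb{R}_+^{n\times n}: X\mathbf{1}=\mu,\ X^\top\mathbf{1}=\nu\}$. Bregman assumption on $\phi:\mathbb{R}\to(-\infty,+\infty]$: $I=\operatorname{dom}\phi$ is an interval with $(0,1)\subseteq\operatorname{int}(I)$; $\phi$ is of Legendre type (proper, closed, strictly convex on $\operatorname{int}(\operatorname{dom}\phi)$, essentially smooth); $\phi$ is $C^1$ on $\operatorname{int}(I)$. $\phi(X):=\sum_{i,j}\phi(X_{ij})$. $\mathcal{F}(C):=\arg\min_{X\in\mathcal{U}(\mu,\nu)}\{\langle C,X\rangle+\gamma\phi(X)\}$ (the unique minimizer). $\phi'_0:=\lim_{x\to0^+}\phi'(x)\in[-\infty,\infty)$. *)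

theory Defs
  imports "HOL-Analysis.Analysis"
begin

text \<open>A convex function phi : R -> (-infinity,+infinity] is modelled as
  phi :: real => ereal with phi x ~= -infinity everywhere.\<close>

definition edom :: "(real \<Rightarrow> ereal) \<Rightarrow> real set" where
  "edom \<phi> = {x. \<phi> x < \<infinity>}"

definition phir :: "(real \<Rightarrow> ereal) \<Rightarrow> real \<Rightarrow> real" where
  "phir \<phi> x = real_of_ereal (\<phi> x)"

definition strictly_convex_on :: "real set \<Rightarrow> (real \<Rightarrow> real) \<Rightarrow> bool" where
  "strictly_convex_on S f \<longleftrightarrow> convex S \<and>
     (\<forall>x\<in>S. \<forall>y\<in>S. \<forall>t. x \<noteq> y \<and> 0 < t \<and> t < 1 \<longrightarrow>
        f ((1 - t) * x + t * y) < (1 - t) * f x + t * f y)"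

definition proper_fun :: "(real \<Rightarrow> ereal) \<Rightarrow> bool" where
  "proper_fun \<phi> \<longleftrightarrow> (\<forall>x. \<phi> x \<noteq> -\<infinity>) \<and> edom \<phi> \<noteq> {}"

definition closed_fun :: "(real \<Rightarrow> ereal) \<Rightarrow> bool" where
  "closed_fun \<phi> \<longleftrightarrow> closed {(x, t::real). \<phi> x \<le> ereal t}"

definition essentially_smooth :: "(real \<Rightarrow> ereal) \<Rightarrow> bool" where
  "essentially_smooth \<phi> \<longleftrightarrow>
     interior (edom \<phi>) \<noteq> {} \<and>
     (\<forall>x\<in>interior (edom \<phi>). phir \<phi> differentiable (at x)) \<and>
     (\<forall>x\<in>frontier (interior (edom \<phi>)).
        filterlim (\<lambda>y. \<bar>deriv (phir \<phi>) y\<bar>) at_top (at x within interior (edom \<phi>)))"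

definition legendre_type :: "(real \<Rightarrow> ereal) \<Rightarrow> bool" where
  "legendre_type \<phi> \<longleftrightarrow> proper_fun \<phi> \<and> closed_fun \<phi> \<and>
     strictly_convex_on (interior (edom \<phi>)) (phir \<phi>) \<and> essentially_smooth \<phi>"

definition bregman_assumption :: "(real \<Rightarrow> ereal) \<Rightarrow> bool" where
  "bregman_assumption \<phi> \<longleftrightarrow>
     is_interval (edom \<phi>) \<and> {0<..<1} \<subseteq> interior (edom \<phi>) \<and>
     legendre_type \<phi> \<and>
     (\<forall>x\<in>interior (edom \<phi>). phir \<phi> differentiable (at x)) \<and>
     continuous_on (interior (edom \<phi>)) (deriv (phir \<phi>))"

definition prob_vec :: "real ^ 'n \<Rightarrow> bool" where
  "prob_vec v \<longleftrightarrow> (\<forall>i. 0 \<le> v $ i) \<and> (\<Sum>i\<in>UNIV. v $ i) = 1"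

definition transport_polytope :: "real ^ 'n \<Rightarrow> real ^ 'n \<Rightarrow> (real ^ 'n ^ 'n) set" where
  "transport_polytope \<mu> \<nu> = {X. (\<forall>i j. 0 \<le> X $ i $ j) \<and>
      (\<forall>i. (\<Sum>j\<in>UNIV. X $ i $ j) = \<mu> $ i) \<and>
      (\<forall>j. (\<Sum>i\<in>UNIV. X $ i $ j) = \<nu> $ j)}"

definition phi_mat :: "(real \<Rightarrow> ereal) \<Rightarrow> real ^ 'n ^ 'n \<Rightarrow> ereal" where
  "phi_mat \<phi> X = (\<Sum>i\<in>UNIV. \<Sum>j\<in>UNIV. \<phi> (X $ i $ j))"

definition frob :: "real ^ 'n ^ 'n \<Rightarrow> real ^ 'n ^ 'n \<Rightarrow> real" where
  "frob C X = (\<Sum>i\<in>UNIV. \<Sum>j\<in>UNIV. C $ i $ j * X $ i $ j)"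

definition reg_obj :: "real \<Rightarrow> (real \<Rightarrow> ereal) \<Rightarrow> real ^ 'n ^ 'n \<Rightarrow> real ^ 'n ^ 'n \<Rightarrow> ereal" where
  "reg_obj \<gamma> \<phi> C X = ereal (frob C X) + ereal \<gamma> * phi_mat \<phi> X"

definition regOT :: "real ^ 'n \<Rightarrow> real ^ 'n \<Rightarrow> real \<Rightarrow> (real \<Rightarrow> ereal) \<Rightarrow> real ^ 'n ^ 'n \<Rightarrow> real ^ 'n ^ 'n" where
  "regOT \<mu> \<nu> \<gamma> \<phi> C = (THE X. X \<in> transport_polytope \<mu> \<nu> \<and>
      (\<forall>Y\<in>transport_polytope \<mu> \<nu>. reg_obj \<gamma> \<phi> C X \<le> reg_obj \<gamma> \<phi> C Y))"

definition unit_mat :: "'n \<Rightarrow> 'n \<Rightarrow> real ^ 'n ^ 'n" where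
  "unit_mat i j = (\<chi> k l. if k = i \<and> l = j then 1 else 0)"

end

theory Submission imports Defs begin

lemma zero_in_D:
  assumes B: "bregman_assumption \<phi>"
    and L: "\<exists>L::real. (deriv (phir \<phi>) \<longlongrightarrow> L) (at_right 0)"
  shows "0 \<in> interior (edom \<phi>)"
proof (rule ccontr)
  let ?D = "interior (edom \<phi>)"
  assume n0: "0 \<notin> ?D"
  have sub: "{0<..<1} \<subseteq> ?D" using B by (simp add: bregman_assumption_def)
  have cvx: "convex ?D"
    using B by (simp add: bregman_assumption_def is_interval_convex_1 convex_interior)
  have pos: "\<forall>y\<in>?D. 0 < y"
  proof
    fix y assume y: "y \<in> ?D"
    show "0 < y"
    proof (rule ccontr)
      assume "\<not> 0 < y"
      with n0 y have "y < 0" by (cases "y = 0") auto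
      have h: "(1/2::real) \<in> ?D" using sub by auto
      define t where "t = (-y) / (1/2 - y)"
      have t0: "0 \<le> t" "t \<le> 1" using \<open>y<0\<close> by (auto simp: t_def field_simps)
      have "(1 - t) * y + t * (1/2) \<in> ?D"
        using convexD_alt[OF cvx y h t0] by simp
      moreover have "(1 - t) * y + t * (1/2) = 0" using \<open>y<0\<close>
        by (simp add: t_def field_simps)
      ultimately show False using n0 by simp
    qed
  qed
  have lp: "0 islimpt ?D"
    using islimpt_subset[OF islimpt_greaterThanLessThan1[of "0::real" 1] sub] by simp
  then have cl: "0 \<in> closure ?D" by (simp add: closure_def)
  have "0 \<in> frontier ?D" using cl n0 by (simp add: frontier_def)
  then have fl: "filterlim (\<lambda>y. \<bar>deriv (phir \<phi>) y\<bar>) at_top (at 0 within ?D)"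
    using B by (simp add: bregman_assumption_def legendre_type_def essentially_smooth_def)
  obtain L where hL: "(deriv (phir \<phi>) \<longlongrightarrow> L) (at 0 within {0<..})" using L by auto
  have "(deriv (phir \<phi>) \<longlongrightarrow> L) (at 0 within ?D)"
    using tendsto_within_subset[OF hL] pos by auto
  then have "((\<lambda>y. \<bar>deriv (phir \<phi>) y\<bar>) \<longlongrightarrow> \<bar>L\<bar>) (at 0 within ?D)"
    by (rule tendsto_rabs)
  moreover have "at 0 within ?D \<noteq> bot" using lp trivial_limit_within by blast
  ultimately show False
    using not_tendsto_and_filterlim_at_infinity filterlim_at_top_imp_at_infinity[OF fl] by blast
qed


lemma phi_eq:
  assumes B: "bregman_assumption \<phi>" and x: "x \<in> interior (edom \<phi>)"
  shows "\<phi> x = ereal (phir \<phi> x)"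
proof -
  have "\<phi> x < \<infinity>" using interior_subset[of "edom \<phi>"] x by (auto simp: edom_def)
  moreover have "\<phi> x \<noteq> -\<infinity>" using B
    by (simp add: bregman_assumption_def legendre_type_def proper_fun_def)
  ultimately show ?thesis by (cases "\<phi> x") (auto simp: phir_def)
qed

lemma entry_bounds:
  assumes "prob_vec \<mu>" and "X \<in> transport_polytope \<mu> \<nu>"
  shows "0 \<le> X $ a $ b" "X $ a $ b \<le> \<mu> $ a" "\<mu> $ a \<le> 1"
proof -
  show "0 \<le> X $ a $ b" using assms(2) by (simp add: transport_polytope_def)
  have "X $ a $ b \<le> (\<Sum>j\<in>UNIV. X $ a $ j)"
    by (rule member_le_sum) (use assms(2) in \<open>auto simp: transport_polytope_def\<close>)
  then show "X $ a $ b \<le> \<mu> $ a" using assms(2) by (simp add: transport_polytope_def)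
  have "\<mu> $ a \<le> (\<Sum>j\<in>UNIV. \<mu> $ j)"
    by (rule member_le_sum) (use assms(1) in \<open>auto simp: prob_vec_def\<close>)
  then show "\<mu> $ a \<le> 1" using assms(1) by (simp add: prob_vec_def)
qed

lemma entry_bounds_col:
  assumes "prob_vec \<nu>" and "X \<in> transport_polytope \<mu> \<nu>"
  shows "X $ a $ b \<le> \<nu> $ b"
proof -
  have "X $ a $ b \<le> (\<Sum>i\<in>UNIV. X $ i $ b)"
    by (rule member_le_sum) (use assms(2) in \<open>auto simp: transport_polytope_def\<close>)
  then show ?thesis using assms(2) by (simp add: transport_polytope_def)
qed

lemma prob_other_zero:
  assumes "prob_vec (\<mu>::real^'n)" "\<mu> $ a = 1" "k \<noteq> a"
  shows "\<mu> $ k = 0"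
proof -
  have "(\<Sum>j\<in>{a,k}. \<mu> $ j) \<le> (\<Sum>j\<in>UNIV. \<mu> $ j)"
    by (rule sum_mono2) (use assms(1) in \<open>auto simp: prob_vec_def\<close>)
  then have "\<mu> $ a + \<mu> $ k \<le> 1" using assms by (simp add: prob_vec_def)
  then show ?thesis using assms by (auto simp: prob_vec_def intro: antisym)
qed

lemma singleton_case:
  assumes mu: "prob_vec \<mu>" and nu: "prob_vec \<nu>"
    and X: "X \<in> transport_polytope \<mu> \<nu>" and Xab: "X $ a $ b = 1"
    and Z: "Z \<in> transport_polytope \<mu> \<nu>"
  shows "Z = (\<chi> k l. if k = a \<and> l = b then 1 else 0)"
proof -
  have ma: "\<mu> $ a = 1" using entry_bounds(2)[OF mu X, where a=a and b=b] entry_bounds(3)[OF mu X, where a=a] Xab by auto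
  have "\<nu> $ b \<le> (\<Sum>j\<in>UNIV. \<nu> $ j)"
    by (rule member_le_sum) (use nu in \<open>auto simp: prob_vec_def\<close>)
  then have nb: "\<nu> $ b = 1" using entry_bounds_col[OF nu X, where a=a and b=b] Xab nu
    by (auto simp: prob_vec_def)
  have off: "Z $ k $ l = 0" if "\<not> (k = a \<and> l = b)" for k l
  proof (cases "k = a")
    case True
    then have "l \<noteq> b" using that by auto
    then have "\<nu> $ l = 0" using prob_other_zero[OF nu nb] by auto
    then show ?thesis using entry_bounds_col[OF nu Z, where a=k and b=l] entry_bounds(1)[OF mu Z, where a=k and b=l] by auto
  next
    case False
    then have "\<mu> $ k = 0" using prob_other_zero[OF mu ma] by auto
    then show ?thesis using entry_bounds(1,2)[OF mu Z, where a=k and b=l] by auto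
  qed
  have "\<mu> $ a = (\<Sum>l\<in>UNIV. Z $ a $ l)" using Z by (simp add: transport_polytope_def)
  also have "\<dots> = Z $ a $ b + (\<Sum>l\<in>UNIV - {b}. Z $ a $ l)"
    by (simp add: sum.remove)
  also have "(\<Sum>l\<in>UNIV - {b}. Z $ a $ l) = 0" using off by (intro sum.neutral) auto
  finally have "Z $ a $ b = 1" using ma by simp
  then show ?thesis using off by (auto simp: vec_eq_iff)
qed


lemma polytope_nonempty:
  assumes mu: "prob_vec \<mu>" and nu: "prob_vec \<nu>"
  shows "(\<chi> a b. \<mu> $ a * \<nu> $ b) \<in> transport_polytope \<mu> \<nu>"
  using mu nu by (auto simp: transport_polytope_def prob_vec_def sum_distrib_left[symmetric] sum_distrib_right[symmetric])

lemma polytope_compact: "compact (transport_polytope \<mu> \<nu>)" if mu: "prob_vec \<mu>"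
proof -
  have cl: "closed (transport_polytope \<mu> \<nu>)"
    unfolding transport_polytope_def
    by (intro closed_Collect_conj closed_Collect_all closed_Collect_le closed_Collect_eq
        continuous_intros)
  have "norm X \<le> 1" if X: "X \<in> transport_polytope \<mu> \<nu>" for X
  proof -
    have "norm X \<le> (\<Sum>a\<in>UNIV. norm (X $ a))" unfolding norm_vec_def
      by (rule L2_set_le_sum) simp
    also have "\<dots> \<le> (\<Sum>a\<in>UNIV. \<Sum>b\<in>UNIV. \<bar>X $ a $ b\<bar>)"
      by (intro sum_mono) (simp add: norm_le_l1_cart)
    also have "\<dots> = (\<Sum>a\<in>UNIV. \<Sum>b\<in>UNIV. X $ a $ b)"
      using X by (simp add: transport_polytope_def)
    also have "\<dots> = (\<Sum>a\<in>UNIV. \<mu> $ a)"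
      using X by (simp add: transport_polytope_def)
    finally show ?thesis using mu by (simp add: prob_vec_def)
  qed
  then have "bounded (transport_polytope \<mu> \<nu>)" by (auto simp: bounded_iff)
  with cl show ?thesis by (simp add: compact_eq_bounded_closed)
qed


lemma aux_ineq:
  fixes s x y g a b :: real
  assumes "s < (x + y) / 2" "0 < g"
  shows "(a + b) / 2 + g * s < ((a + g * x) + (b + g * y)) / 2"
proof -
  have "g * s < g * ((x + y) / 2)" using mult_strict_left_mono[OF assms] .
  then show ?thesis by (simp add: algebra_simps add_divide_distrib)
qed

lemma unique_min:
  fixes \<mu> \<nu> :: "real ^ 'n" and C :: "real ^ 'n ^ 'n"
  assumes mu: "prob_vec \<mu>" and nu: "prob_vec \<nu>" and g0: "\<gamma> > 0"
    and B: "bregman_assumption \<phi>"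
    and L: "\<exists>L::real. (deriv (phir \<phi>) \<longlongrightarrow> L) (at_right 0)"
  shows "\<exists>!X. X \<in> transport_polytope \<mu> \<nu> \<and>
      (\<forall>Y\<in>transport_polytope \<mu> \<nu>. reg_obj \<gamma> \<phi> C X \<le> reg_obj \<gamma> \<phi> C Y)"
proof (cases "\<exists>X\<in>transport_polytope \<mu> \<nu>. \<exists>a b. X $ a $ b = 1")
  case True
  then obtain X a b where X: "X \<in> transport_polytope \<mu> \<nu>" and Xab: "X $ a $ b = 1" by blast
  have eq: "Z = X" if "Z \<in> transport_polytope \<mu> \<nu>" for Z
    using trans[OF singleton_case[OF mu nu X Xab that] sym[OF singleton_case[OF mu nu X Xab X]]] .
  show ?thesis
  proof (rule ex1I[of _ X])
    show "X \<in> transport_polytope \<mu> \<nu> \<and> (\<forall>Y\<in>transport_polytope \<mu> \<nu>. reg_obj \<gamma> \<phi> C X \<le> reg_obj \<gamma> \<phi> C Y)"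
      using X eq by (metis order_refl)
  qed (use eq in blast)
next
  case False
  let ?P = "transport_polytope \<mu> \<nu>"
  let ?D = "interior (edom \<phi>)"
  let ?f = "phir \<phi>"
  have inD: "X $ a $ b \<in> ?D" if X: "X \<in> ?P" for X a b
  proof -
    have "0 \<le> X $ a $ b" "X $ a $ b \<le> 1"
      using entry_bounds(1,2)[OF mu X, where a=a and b=b] entry_bounds(3)[OF mu X, where a=a]
      by auto
    moreover have "X $ a $ b \<noteq> 1" using False X by auto
    moreover have "0 \<in> ?D" using zero_in_D[OF B L] .
    moreover have "{0<..<1} \<subseteq> ?D" using B by (simp add: bregman_assumption_def)
    ultimately show ?thesis by (cases "X $ a $ b = 0") auto
  qed
  define g where "g X = frob C X + \<gamma> * (\<Sum>a\<in>UNIV. \<Sum>b\<in>UNIV. ?f (X $ a $ b))" for X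
  have reg: "reg_obj \<gamma> \<phi> C X = ereal (g X)" if X: "X \<in> ?P" for X
  proof -
    have "phi_mat \<phi> X = ereal (\<Sum>a\<in>UNIV. \<Sum>b\<in>UNIV. ?f (X $ a $ b))"
      unfolding phi_mat_def using phi_eq[OF B inD[OF X]] by (simp add: sum_ereal)
    then show ?thesis by (simp add: reg_obj_def g_def)
  qed
  have contf: "continuous_on ?D ?f"
    using B by (auto simp: bregman_assumption_def intro!: differentiable_imp_continuous_on
        simp: differentiable_on_def differentiable_at_withinI)
  have contg: "continuous_on ?P g"
  proof -
    have c1: "continuous_on ?P (\<lambda>X. ?f (X $ a $ b))" for a b
    proof (rule continuous_on_compose2[OF contf])
      show "continuous_on ?P (\<lambda>X. X $ a $ b)" by (intro continuous_intros)
      show "(\<lambda>X. X $ a $ b) ` ?P \<subseteq> ?D" using inD by auto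
    qed
    show ?thesis unfolding g_def frob_def
      by (intro continuous_intros c1)
  qed
  obtain X where X: "X \<in> ?P" and Xmin: "\<forall>Y\<in>?P. g X \<le> g Y"
    using continuous_attains_inf[OF polytope_compact[OF mu] _ contg] polytope_nonempty[OF mu nu]
    by blast
  have uniq: "Y = X" if Y: "Y \<in> ?P" and Ymin: "\<forall>Z\<in>?P. g Y \<le> g Z" for Y
  proof (rule ccontr)
    assume ne: "Y \<noteq> X"
    define M where "M = (1/2::real) *\<^sub>R X + (1/2::real) *\<^sub>R Y"
    have M: "M \<in> ?P" using X Y unfolding M_def transport_polytope_def
      by (auto simp: sum.distrib sum_divide_distrib[symmetric])
    have sc: "strictly_convex_on ?D ?f"
      using B by (simp add: bregman_assumption_def legendre_type_def)
    have sc_half: "?f ((1 - 1/2) * x + (1/2) * y) < (1 - 1/2) * ?f x + (1/2) * ?f y"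
      if "x \<in> ?D" "y \<in> ?D" "x \<noteq> y" for x y :: real
      using sc that unfolding strictly_convex_on_def by (metis field_sum_of_halves half_gt_zero_iff zero_less_one less_add_same_cancel1)
    have le: "?f (M $ a $ b) \<le> (?f (X $ a $ b) + ?f (Y $ a $ b)) / 2" for a b
    proof (cases "X $ a $ b = Y $ a $ b")
      case True then show ?thesis by (simp add: M_def)
    next
      case False
      have "?f ((1 - 1/2) * X $ a $ b + (1/2) * Y $ a $ b) < (1 - 1/2) * ?f (X $ a $ b) + (1/2) * ?f (Y $ a $ b)"
        using sc_half[OF inD[OF X] inD[OF Y] False] .
      then show ?thesis by (simp add: M_def)
    qed
    have lt: "?f (M $ a $ b) < (?f (X $ a $ b) + ?f (Y $ a $ b)) / 2" if "X $ a $ b \<noteq> Y $ a $ b" for a b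
    proof -
      have "?f ((1 - 1/2) * X $ a $ b + (1/2) * Y $ a $ b) < (1 - 1/2) * ?f (X $ a $ b) + (1/2) * ?f (Y $ a $ b)"
        using sc_half[OF inD[OF X] inD[OF Y] that] .
      then show ?thesis by (simp add: M_def)
    qed
    obtain a b where ab: "X $ a $ b \<noteq> Y $ a $ b" using ne by (metis vec_eq_iff)
    have "(\<Sum>a\<in>UNIV. \<Sum>b\<in>UNIV. ?f (M $ a $ b)) <
          (\<Sum>a\<in>UNIV. \<Sum>b\<in>UNIV. (?f (X $ a $ b) + ?f (Y $ a $ b)) / 2)"
    proof (rule sum_strict_mono_ex1)
      show "\<forall>x\<in>UNIV. (\<Sum>b\<in>UNIV. ?f (M $ x $ b)) \<le> (\<Sum>b\<in>UNIV. (?f (X $ x $ b) + ?f (Y $ x $ b)) / 2)"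
        using le by (auto intro: sum_mono)
      show "\<exists>x\<in>UNIV. (\<Sum>b\<in>UNIV. ?f (M $ x $ b)) < (\<Sum>b\<in>UNIV. (?f (X $ x $ b) + ?f (Y $ x $ b)) / 2)"
        by (rule bexI[of _ a], rule sum_strict_mono_ex1) (use le lt[OF ab] in \<open>auto intro!: bexI[of _ b]\<close>)
    qed simp
    also have "(\<Sum>a\<in>UNIV. \<Sum>b\<in>UNIV. (?f (X $ a $ b) + ?f (Y $ a $ b)) / 2) =
        ((\<Sum>a\<in>UNIV. \<Sum>b\<in>UNIV. ?f (X $ a $ b)) + (\<Sum>a\<in>UNIV. \<Sum>b\<in>UNIV. ?f (Y $ a $ b))) / 2"
      by (simp add: sum.distrib sum_divide_distrib[symmetric])
    finally have st: "(\<Sum>a\<in>UNIV. \<Sum>b\<in>UNIV. ?f (M $ a $ b)) <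
        ((\<Sum>a\<in>UNIV. \<Sum>b\<in>UNIV. ?f (X $ a $ b)) + (\<Sum>a\<in>UNIV. \<Sum>b\<in>UNIV. ?f (Y $ a $ b))) / 2" .
    have fr: "frob C M = (frob C X + frob C Y) / 2"
      unfolding frob_def M_def by (simp add: sum.distrib sum_divide_distrib[symmetric] algebra_simps)
    have "g M < (g X + g Y) / 2"
      unfolding g_def fr by (rule aux_ineq[OF st g0])
    moreover have "g X \<le> g M" "g Y \<le> g M" using Xmin Ymin M by auto
    ultimately show False by simp
  qed
  show ?thesis
  proof (rule ex1I[of _ X])
    show "X \<in> ?P \<and> (\<forall>Y\<in>?P. reg_obj \<gamma> \<phi> C X \<le> reg_obj \<gamma> \<phi> C Y)"
      using X Xmin reg by auto
    fix Y assume "Y \<in> ?P \<and> (\<forall>Z\<in>?P. reg_obj \<gamma> \<phi> C Y \<le> reg_obj \<gamma> \<phi> C Z)"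
    then show "Y = X" using uniq reg by auto
  qed
qed


lemma frob_shift:
  "frob (C + lam *\<^sub>R unit_mat i j) Y = frob C Y + lam * Y $ i $ j"
proof -
  have "frob (C + lam *\<^sub>R unit_mat i j) Y =
        frob C Y + (\<Sum>a\<in>UNIV. \<Sum>b\<in>UNIV. (if a = i \<and> b = j then lam * Y $ a $ b else 0))"
  proof -
    have t: "(C + lam *\<^sub>R unit_mat i j) $ a $ b * Y $ a $ b =
        C $ a $ b * Y $ a $ b + (if a = i \<and> b = j then lam * Y $ a $ b else 0)" for a b
      by (simp add: unit_mat_def algebra_simps)
    show ?thesis unfolding frob_def by (simp only: t sum.distrib)
  qed
  also have "(\<Sum>a\<in>UNIV. \<Sum>b\<in>UNIV. (if a = i \<and> b = j then lam * Y $ a $ b else 0)) = lam * Y $ i $ j"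
  proof -
    have inner: "(\<Sum>b\<in>UNIV. (if a = i \<and> b = j then lam * Y $ a $ b else 0)) =
        (if a = i then lam * Y $ i $ j else 0)" for a
      by (cases "a = i") (simp_all add: sum.delta sum.delta')
    show ?thesis by (simp only: inner) (simp add: sum.delta sum.delta')
  qed
  finally show ?thesis .
qed

theorem proposition5:
  fixes \<mu> \<nu> :: "real ^ 'n" and \<gamma> :: real and \<phi> :: "real \<Rightarrow> ereal"
    and Chat :: "real ^ 'n ^ 'n" and i j :: 'n
  assumes "prob_vec \<mu>" and "prob_vec \<nu>" and "\<gamma> > 0"
    and "bregman_assumption \<phi>"
    and "\<exists>L::real. (deriv (phir \<phi>) \<longlongrightarrow> L) (at_right 0)"
    and "regOT \<mu> \<nu> \<gamma> \<phi> Chat $ i $ j = 0"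
  shows "\<forall>lam>0. regOT \<mu> \<nu> \<gamma> \<phi> (Chat + lam *\<^sub>R unit_mat i j) = regOT \<mu> \<nu> \<gamma> \<phi> Chat"
proof (intro allI impI)
  fix lam :: real assume lam: "lam > 0"
  let ?P = "transport_polytope \<mu> \<nu>"
  let ?C' = "Chat + lam *\<^sub>R unit_mat i j"
  define Xh where "Xh = regOT \<mu> \<nu> \<gamma> \<phi> Chat"
  have U: "\<exists>!X. X \<in> ?P \<and> (\<forall>Y\<in>?P. reg_obj \<gamma> \<phi> Chat X \<le> reg_obj \<gamma> \<phi> Chat Y)"
    using unique_min[OF assms(1-5)] .
  have Xh: "Xh \<in> ?P \<and> (\<forall>Y\<in>?P. reg_obj \<gamma> \<phi> Chat Xh \<le> reg_obj \<gamma> \<phi> Chat Y)"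
    unfolding Xh_def regOT_def by (rule theI'[OF U])
  have Xh0: "Xh $ i $ j = 0" using assms(6) by (simp add: Xh_def)
  have ge: "reg_obj \<gamma> \<phi> Chat Y \<le> reg_obj \<gamma> \<phi> ?C' Y" if "Y \<in> ?P" for Y
  proof -
    have "0 \<le> Y $ i $ j" using that by (simp add: transport_polytope_def)
    then have "frob Chat Y \<le> frob ?C' Y" using lam by (simp add: frob_shift)
    then show ?thesis unfolding reg_obj_def by (intro add_right_mono) simp
  qed
  have eqX: "reg_obj \<gamma> \<phi> ?C' Xh = reg_obj \<gamma> \<phi> Chat Xh"
    unfolding reg_obj_def by (simp add: frob_shift Xh0)
  have min': "Xh \<in> ?P \<and> (\<forall>Y\<in>?P. reg_obj \<gamma> \<phi> ?C' Xh \<le> reg_obj \<gamma> \<phi> ?C' Y)"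
    using Xh ge eqX by (metis order_trans)
  have "regOT \<mu> \<nu> \<gamma> \<phi> ?C' = Xh"
    unfolding regOT_def
  proof (rule the_equality)
    show "Xh \<in> ?P \<and> (\<forall>Y\<in>?P. reg_obj \<gamma> \<phi> ?C' Xh \<le> reg_obj \<gamma> \<phi> ?C' Y)" by (rule min')
    fix Y assume Y: "Y \<in> ?P \<and> (\<forall>Z\<in>?P. reg_obj \<gamma> \<phi> ?C' Y \<le> reg_obj \<gamma> \<phi> ?C' Z)"
    have "reg_obj \<gamma> \<phi> Chat Y \<le> reg_obj \<gamma> \<phi> Chat Xh"
      using ge[of Y] Y Xh eqX by (metis order_trans)
    then have "Y \<in> ?P \<and> (\<forall>Z\<in>?P. reg_obj \<gamma> \<phi> Chat Y \<le> reg_obj \<gamma> \<phi> Chat Z)"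
      using Y Xh by (meson order_trans)
    then show "Y = Xh" using U Xh by blast
  qed
  then show "regOT \<mu> \<nu> \<gamma> \<phi> ?C' = regOT \<mu> \<nu> \<gamma> \<phi> Chat" by (simp add: Xh_def)
qed

end
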